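(* Let $E$ be a regular biordered set satisfying: (E1) there exists $0\in E$ with $0\,\omega\,e$ for every $e\in E$; (E2) there is a map $e\mapsto e'$ on $E$ such that for all $e,f\in E$: (i) $(e')'=e$; (ii) $f\,\omega^l\,e$ iff $e'\,\omega^r\,f'$; (iii) $f\,\omega^l\,e'$ iff $M(f,e)=\{0\}$. Let $S$ be a regular semigroup generated by its idempotents whose biordered set of idempotents is $E$. Then for each $e\in E$, $\{x\in S: xe=0\}=Se'$ and $\{x\in S: ex=0\}=e'S$.
   Context: For a semigroup $S$, its biordered set is the set of idempotents with product $ef$ (computed in $S$) defined when $\{ef,fe\}\cap\{e,f\}\ne\emptyset$. A semigroup is regular if for every $x$ there is $y$ with $xyx=x$; a regular biordered set is one isomorphic to the biordered set of some regular semigroup. In $E$: $\omega^l=\{(e,f): ef=e\}$, $\omega^r=\{(e,f): fe=e\}$, $\omega=\omega^l\cap\omega^r$, $M(e,f)=\{g\in E: g\,\omega^l\,e,\ g\,\omega^r\,f\}$. Here $0$ denotes the element of $E$ given by (E1). *)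

theory Defs
  imports Main
begin

text \<open>The semigroup S is the ambient type of class semigroup_mult (S = UNIV).\<close>

definition idems :: "'a::semigroup_mult set" where
  "idems = {e. e * e = e}"

definition omega_l :: "'a::semigroup_mult \<Rightarrow> 'a \<Rightarrow> bool" where
  "omega_l e f \<longleftrightarrow> e * f = e"

definition omega_r :: "'a::semigroup_mult \<Rightarrow> 'a \<Rightarrow> bool" where
  "omega_r e f \<longleftrightarrow> f * e = e"

definition omega :: "'a::semigroup_mult \<Rightarrow> 'a \<Rightarrow> bool" where
  "omega e f \<longleftrightarrow> omega_l e f \<and> omega_r e f"

definition MSet :: "'a::semigroup_mult \<Rightarrow> 'a \<Rightarrow> 'a set" where
  "MSet e f = {g \<in> idems. omega_l g e \<and> omega_r g f}"

definition regular_semigroup :: "'a::semigroup_mult itself \<Rightarrow> bool" where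
  "regular_semigroup _ \<longleftrightarrow> (\<forall>x::'a. \<exists>y. x * y * x = x)"

inductive idem_generated :: "'a::semigroup_mult \<Rightarrow> bool" where
  base: "e \<in> idems \<Longrightarrow> idem_generated e"
| prod: "idem_generated x \<Longrightarrow> idem_generated y \<Longrightarrow> idem_generated (x * y)"

end

theory Submission
  imports Defs
begin

lemma zero_abs:
  fixes z :: "'a::semigroup_mult"
  assumes gen: "\<forall>x::'a. idem_generated x" and E1: "\<forall>f\<in>idems. omega z f"
  shows "z * x = z \<and> x * z = z"
proof -
  have "idem_generated x" using gen by blast
  then show ?thesis
  proof (induction x rule: idem_generated.induct)
    case (base e) then show ?case using E1 by (auto simp: omega_def omega_l_def omega_r_def)
  next
    case (prod x y) then show ?case by (simp add: mult.assoc[symmetric]) (simp add: mult.assoc)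
  qed
qed

lemma assoc_ext:
  fixes a b :: "'a::semigroup_mult"
  assumes "a * b = c"
  shows "a * (b * w) = c * w"
  using assms by (simp add: mult.assoc[symmetric])

lemma inv_ex:
  fixes x :: "'a::semigroup_mult"
  assumes reg: "regular_semigroup TYPE('a)"
  shows "\<exists>y. x * (y * x) = x \<and> y * (x * y) = y"
proof -
  obtain y where y0: "x * y * x = x" using reg unfolding regular_semigroup_def by blast
  have y: "x * (y * x) = x" using y0 by (simp add: mult.assoc)
  have y2: "x * (y * (x * w)) = x * w" for w using assoc_ext[OF y, of w] by (simp add: mult.assoc)
  show ?thesis
    by (rule exI[of _ "y * (x * y)"]) (simp add: mult.assoc y y2)
qed

lemma mset_prod:
  fixes z :: "'a::semigroup_mult"
  assumes reg: "regular_semigroup TYPE('a)"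
    and za: "\<And>x. z * x = z \<and> x * z = z"
    and M: "MSet a b = {z}" and ia: "a * a = a" and ib: "b * b = b"
  shows "a * b = z"
proof -
  obtain y where y0: "(a * b) * (y * (a * b)) = a * b" "y * ((a * b) * y) = y"
    using inv_ex[OF reg] by blast
  have y: "a * (b * (y * (a * b))) = a * b" "y * (a * (b * y)) = y"
    using y0 by (simp_all add: mult.assoc)
  have y2: "y * (a * (b * (y * w))) = y * w" for w using assoc_ext[OF y(2), of w] by (simp add: mult.assoc)
  have ia2: "a * (a * w) = a * w" for w using assoc_ext[OF ia] .
  have ib2: "b * (b * w) = b * w" for w using assoc_ext[OF ib] .
  define h where "h = b * (y * a)"
  have "h * a = h" "b * h = h" "h * h = h" unfolding h_def by (simp_all add: mult.assoc ia ia2 ib2 y2)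
  then have "h \<in> MSet a b" by (simp add: MSet_def idems_def omega_l_def omega_r_def)
  then have hz: "h = z" using M by blast
  have "a * b = a * (h * b)" using y unfolding h_def by (simp add: mult.assoc)
  then show ?thesis using hz za by simp
qed

lemma three_z:
  fixes z :: "'a::semigroup_mult"
  assumes "\<And>x. z * x = z \<and> x * z = z" "g * g = g" "g * f = g" "e * g = g" "f * e = z"
  shows "g = z"
proof -
  have "g = (g * f) * (e * g)" using assms by simp
  also have "... = g * (f * e) * g" by (simp add: mult.assoc)
  finally show ?thesis using assms by simp
qed

theorem lemma3p3:
  fixes z :: "'a::semigroup_mult" and c :: "'a \<Rightarrow> 'a" and e :: 'a
  assumes reg: "regular_semigroup TYPE('a)"
    and gen: "\<forall>x::'a. idem_generated x"
    and E1: "z \<in> idems" "\<forall>f\<in>idems. omega z f"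
    and E2_closed: "\<forall>f\<in>idems. c f \<in> idems"
    and E2i: "\<forall>f\<in>idems. c (c f) = f"
    and E2ii: "\<forall>f\<in>idems. \<forall>g\<in>idems. omega_l g f \<longleftrightarrow> omega_r (c f) (c g)"
    and E2iii: "\<forall>f\<in>idems. \<forall>g\<in>idems. omega_l g (c f) \<longleftrightarrow> MSet g f = {z}"
    and e: "e \<in> idems"
  shows "{x. x * e = z} = {x * c e | x. True} \<and> {x. e * x = z} = {c e * x | x. True}"
proof -
  have za: "\<And>x. z * x = z \<and> x * z = z" using zero_abs[OF gen E1(2)] by blast
  have ce: "c e \<in> idems" using E2_closed e by blast
  have ide: "e * e = e" "c e * c e = c e" using e ce by (auto simp: idems_def)
  have M1: "MSet (c e) e = {z}" using E2iii e ce ide by (auto simp: omega_l_def)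
  have p1: "c e * e = z" by (rule mset_prod[OF reg za M1 ide(2) ide(1)])
  have M2: "MSet e (c e) = {z}" using E2iii[rule_format, of "c e" e] e ce ide E2i
    by (auto simp: omega_l_def)
  have p2: "e * c e = z" by (rule mset_prod[OF reg za M2 ide(1) ide(2)])
  have A: "{x. x * e = z} = {x * c e | x. True}"
  proof (intro equalityI subsetI)
    fix x assume "x \<in> {x. x * e = z}"
    then have xe: "x * e = z" by simp
    obtain y where y: "x * (y * x) = x" "y * (x * y) = y" using inv_ex[OF reg] by blast
    define f where "f = y * x"
    have fi: "f \<in> idems" using y unfolding f_def idems_def by (simp add: mult.assoc)
    have fe: "f * e = z" unfolding f_def using xe za by (simp add: mult.assoc)
    have "MSet f e = {z}"
    proof
      show "{z} \<subseteq> MSet f e" using E1 za by (auto simp: MSet_def omega_l_def omega_r_def)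
      show "MSet f e \<subseteq> {z}"
      proof
        fix g assume "g \<in> MSet f e"
        then have g: "g * g = g" "g * f = g" "e * g = g"
          by (auto simp: MSet_def idems_def omega_l_def omega_r_def)
        show "g \<in> {z}" using three_z[OF za g fe] by simp
      qed
    qed
    then have "f * c e = f" using E2iii e fi by (auto simp: omega_l_def)
    moreover have "x = x * f" using y unfolding f_def by (simp add: mult.assoc)
    ultimately have "x = (x * f) * c e" by (metis mult.assoc)
    then show "x \<in> {x * c e | x. True}" by blast
  next
    fix x assume "x \<in> {x * c e | x. True}"
    then obtain w where "x = w * c e" by blast
    then show "x \<in> {x. x * e = z}" using p1 za by (simp add: mult.assoc)
  qed
  have B: "{x. e * x = z} = {c e * x | x. True}"
  proof (intro equalityI subsetI)
    fix x assume "x \<in> {x. e * x = z}"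
    then have xe: "e * x = z" by simp
    obtain y where y: "x * (y * x) = x" "y * (x * y) = y" using inv_ex[OF reg] by blast
    define f where "f = x * y"
    have fi: "f \<in> idems" using y unfolding f_def idems_def by (simp add: mult.assoc)
    have fe: "e * f = z" unfolding f_def using xe za by (simp add: mult.assoc[symmetric])
    have "MSet e f = {z}"
    proof
      show "{z} \<subseteq> MSet e f" using E1 za by (auto simp: MSet_def omega_l_def omega_r_def)
      show "MSet e f \<subseteq> {z}"
      proof
        fix g assume "g \<in> MSet e f"
        then have g: "g * g = g" "g * e = g" "f * g = g"
          by (auto simp: MSet_def idems_def omega_l_def omega_r_def)
        show "g \<in> {z}" using three_z[OF za g fe] by simp
      qed
    qed
    then have "omega_l e (c f)" using E2iii fi e by blast
    then have "omega_r (c (c f)) (c e)" using E2ii E2_closed fi e by blast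
    then have "c e * f = f" using E2i fi by (simp add: omega_r_def)
    moreover have "x = f * x" using y unfolding f_def by (simp add: mult.assoc)
    ultimately have "x = c e * (f * x)" by (metis mult.assoc)
    then show "x \<in> {c e * x | x. True}" by blast
  next
    fix x assume "x \<in> {c e * x | x. True}"
    then obtain w where "x = c e * w" by blast
    then show "x \<in> {x. e * x = z}" using p2 za by (simp add: mult.assoc[symmetric])
  qed
  show ?thesis using A B by blast
qed

end
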